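(* Assume $\kappa\ge\|f'\|_{C[-\beta,\beta]}$, $\|\phi^0\|_\infty\le\beta$ and $\tau_1<(\kappa m\Gamma(2-\alpha))^{-1/\alpha}$. Then the $L1$-sESAV scheme is energy-stable for arbitrary time steps $\tau_n$, $n\ge2$: $\mathcal E_h[\phi^n,R^n]\le\mathcal E_h[\phi^0,R^0]$ for all $n\ge1$.
   Context: Setting: $\Omega=(0,L)^2$ with periodic boundary conditions; constants $m>0$, $\varepsilon>0$, $\alpha\in(0,1)$. The nonlinearity $f=-F'$ is one of: (double-well) $F(\phi)=\frac14(1-\phi^2)^2$, $f(\phi)=\phi-\phi^3$, with $\beta=1$; or (Flory–Huggins) $F(\phi)=\frac{\theta}{2}[(1+\phi)\ln(1+\phi)+(1-\phi)\ln(1-\phi)]-\frac{\theta_c}{2}\phi^2$, $f(\phi)=\frac{\theta}{2}\ln\frac{1-\phi}{1+\phi}+\theta_c\phi$ on $(-1,1)$, with $\theta_c>\theta>0$ and $\beta\in(0,1)$ the positive root of $f$. In both cases $f(\pm\beta)=0$. Spatial discretization: $M\in\mathbb N$, $h=L/M$; $\mathbb V_h$ is the space of real grid functions $v=\{v_{ij}\}_{i,j\in\mathbb Z}$ that are $M$-periodic in each index; $\langle v,w\rangle=h^2\sum_{i,j=1}^Mv_{ij}w_{ij}$, $\|v\|=\sqrt{\langle v,v\rangle}$, $\|v\|_\infty=\max_{1\le i,j\le M}|v_{ij}|$, $\mathbb V_\beta=\{v\in\mathbb V_h:\|v\|_\infty\le\beta\}$; $\Delta_hv_{ij}=h^{-2}(v_{i+1,j}+v_{i-1,j}+v_{i,j+1}+v_{i,j-1}-4v_{ij})$;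 $\nabla_hv_{ij}=\big(\frac{v_{i+1,j}-v_{ij}}h,\frac{v_{i,j+1}-v_{ij}}h\big)$ and $\|\nabla_hv\|^2=h^2\sum_{i,j=1}^M|\nabla_hv_{ij}|^2$. Scalar functions act on grid functions pointwise. $E_{1h}[v]=\langle F(v),1\rangle$ and $g_h(v,w)=\exp(w)/\exp(E_{1h}[v])$ for $v\in\mathbb V_h$ (with $\|v\|_\infty<1$ in the Flory–Huggins case) and $w\in\mathbb R$. The discrete modified energy is $\mathcal E_h[\phi,R]=\frac{\varepsilon^2}{2}\|\nabla_h\phi\|^2+R$. Auxiliary functional: $V:\mathbb R\to\mathbb R$ satisfies (A1) $V\in C^1(\mathbb R)\cap W^{2,\infty}(\mathbb R)$, $V(1)=1$, $V'(1)=0$, $|V'|\le K_1$; (A2) $0\le V\le K_2$ for a constant $K_2>0$; (A3) $|z_1-1|\le|z_2-1|$ implies $|V(z_1)-1|\le|V(z_2)-1|$. Time grid: $0=t_0<t_1<\dots<t_N=T$, $\tau_k=t_k-t_{k-1}$, $r_k=\tau_k/\tau_{k-1}$ ($k\ge2$), $\nabla_\tau v^k=v^k-v^{k-1}$, $\mathbb D_\tau v^k=\nabla_\tau v^k/\tau_k$, $\omega_\mu(t)=t^{\mu-1}/\Gamma(\mu)$. Constant $\kappa\ge0$; data $\phi^0\in\mathbb V_h$, $R^0\in\mathbb R$. For $n\ge2$ the predicted solution is $\hat\phi^n=\min\{\max\{(1+r_n)\phi^{n-1}-r_n\phi^{n-2},-\beta\},\beta\}$ (pointwise). $L1$-sESAV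 scheme: $A^{(n)}_{n-k}=\frac1{\tau_k}\int_{t_{k-1}}^{t_k}\omega_{1-\alpha}(t_n-s)\,ds$ and $\mathbb D^\alpha_\tau v^n=\sum_{k=1}^nA^{(n)}_{n-k}\nabla_\tau v^k$. For $n=1$, $\hat\phi^1\in\mathbb V_\beta$ is the solution of the nonlinear first-step equation $A^{(1)}_0(\hat\phi^1-\phi^0)=m(\varepsilon^2\Delta_h\hat\phi^1+f(\hat\phi^1))$. For $n\ge1$, with $V^n:=V(g_h(\hat\phi^n,R^{n-1}))$, $(\phi^n,R^n)$ is defined by $\mathbb D^\alpha_\tau\phi^n=m(\varepsilon^2\Delta_h\phi^n+V^nf(\hat\phi^n)-\kappa V^n(\phi^n-\hat\phi^n))$ and $\mathbb D_\tau R^n=V^n\langle-f(\hat\phi^n)+\kappa(\phi^n-\hat\phi^n),\mathbb D_\tau\phi^n\rangle$. *)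

theory Defs
  imports "HOL-Analysis.Analysis"
begin

text \<open>Grid functions: real functions on the integer lattice; the space V_h
consists of the M-periodic ones.\<close>
type_synonym gridfun = "int \<Rightarrow> int \<Rightarrow> real"

definition periodic_grid :: "nat \<Rightarrow> gridfun \<Rightarrow> bool" where
  "periodic_grid M v \<longleftrightarrow> (\<forall>i j. v (i + int M) j = v i j \<and> v i (j + int M) = v i j)"

definition grid_inner :: "real \<Rightarrow> nat \<Rightarrow> gridfun \<Rightarrow> gridfun \<Rightarrow> real" where
  "grid_inner h M v w = h\<^sup>2 * (\<Sum>i\<in>{1..int M}. \<Sum>j\<in>{1..int M}. v i j * w i j)"

definition grid_supnorm :: "nat \<Rightarrow> gridfun \<Rightarrow> real" where
  "grid_supnorm M v = Max {\<bar>v i j\<bar> | i j. i \<in> {1..int M} \<and> j \<in> {1..int M}}"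

definition V_beta :: "nat \<Rightarrow> real \<Rightarrow> gridfun set" where
  "V_beta M \<beta> = {v. periodic_grid M v \<and> grid_supnorm M v \<le> \<beta>}"

definition lap_h :: "real \<Rightarrow> gridfun \<Rightarrow> gridfun" where
  "lap_h h v = (\<lambda>i j. (v (i+1) j + v (i-1) j + v i (j+1) + v i (j-1) - 4 * v i j) / h\<^sup>2)"

definition grad_norm_sq :: "real \<Rightarrow> nat \<Rightarrow> gridfun \<Rightarrow> real" where
  "grad_norm_sq h M v = h\<^sup>2 * (\<Sum>i\<in>{1..int M}. \<Sum>j\<in>{1..int M}.
      ((v (i+1) j - v i j) / h)\<^sup>2 + ((v i (j+1) - v i j) / h)\<^sup>2)"

definition E1h :: "(real \<Rightarrow> real) \<Rightarrow> real \<Rightarrow> nat \<Rightarrow> gridfun \<Rightarrow> real" where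
  "E1h F h M v = grid_inner h M (\<lambda>i j. F (v i j)) (\<lambda>i j. 1)"

definition g_h :: "(real \<Rightarrow> real) \<Rightarrow> real \<Rightarrow> nat \<Rightarrow> gridfun \<Rightarrow> real \<Rightarrow> real" where
  "g_h F h M v w = exp w / exp (E1h F h M v)"

definition energy_h :: "real \<Rightarrow> real \<Rightarrow> nat \<Rightarrow> gridfun \<Rightarrow> real \<Rightarrow> real" where
  "energy_h \<epsilon> h M \<phi> R = \<epsilon>\<^sup>2 / 2 * grad_norm_sq h M \<phi> + R"

definition F_dw :: "real \<Rightarrow> real" where "F_dw x = (1 - x\<^sup>2)\<^sup>2 / 4"
definition f_dw :: "real \<Rightarrow> real" where "f_dw x = x - x ^ 3"
definition F_fh :: "real \<Rightarrow> real \<Rightarrow> real \<Rightarrow> real" where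
  "F_fh \<theta> \<theta>c x = \<theta> / 2 * ((1 + x) * ln (1 + x) + (1 - x) * ln (1 - x)) - \<theta>c / 2 * x\<^sup>2"
definition f_fh :: "real \<Rightarrow> real \<Rightarrow> real \<Rightarrow> real" where
  "f_fh \<theta> \<theta>c x = \<theta> / 2 * ln ((1 - x) / (1 + x)) + \<theta>c * x"

definition tau :: "(nat \<Rightarrow> real) \<Rightarrow> nat \<Rightarrow> real" where
  "tau t k = t k - t (k - 1)"

definition ratio :: "(nat \<Rightarrow> real) \<Rightarrow> nat \<Rightarrow> real" where
  "ratio t k = tau t k / tau t (k - 1)"

definition omega :: "real \<Rightarrow> real \<Rightarrow> real" where
  "omega \<mu> x = x powr (\<mu> - 1) / Gamma \<mu>"

text \<open>L1 coefficient A^{(n)}_{n-k}.\<close>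
definition L1_coef :: "real \<Rightarrow> (nat \<Rightarrow> real) \<Rightarrow> nat \<Rightarrow> nat \<Rightarrow> real" where
  "L1_coef \<alpha> t n k = (1 / tau t k) * integral {t (k - 1) .. t k} (\<lambda>s. omega (1 - \<alpha>) (t n - s))"

definition L1_caputo :: "real \<Rightarrow> (nat \<Rightarrow> real) \<Rightarrow> (nat \<Rightarrow> gridfun) \<Rightarrow> nat \<Rightarrow> gridfun" where
  "L1_caputo \<alpha> t v n = (\<lambda>i j. \<Sum>k\<in>{1..n}. L1_coef \<alpha> t n k * (v k i j - v (k - 1) i j))"

definition clip :: "real \<Rightarrow> real \<Rightarrow> real" where
  "clip \<beta> x = min (max x (- \<beta>)) \<beta>"

end

theory Submission
  imports Defs
begin

lemma slope_mono:
  fixes f d :: "real \<Rightarrow> real"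
  assumes ab: "a < b" and bc: "b < c" and cont: "continuous_on {a..c} f"
    and der: "\<And>x. a < x \<Longrightarrow> x < c \<Longrightarrow> (f has_real_derivative d x) (at x)"
    and mono: "\<And>x y. a < x \<Longrightarrow> x \<le> y \<Longrightarrow> y < c \<Longrightarrow> d x \<le> d y"
  shows "(f b - f a)/(b-a) \<le> (f c - f b)/(c-b)"
proof -
  have c1: "continuous_on {a..b} f" using cont by (rule continuous_on_subset) (use bc in auto)
  have c2: "continuous_on {b..c} f" using cont by (rule continuous_on_subset) (use ab in auto)
  obtain l z where z: "a < z" "z < b" "DERIV f z :> l" "f b - f a = (b-a)*l"
    using MVT[OF ab c1] der bc real_differentiable_def by (smt (verit))
  obtain l2 z2 where z2: "b < z2" "z2 < c" "DERIV f z2 :> l2" "f c - f b = (c-b)*l2"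
    using MVT[OF bc c2] der ab real_differentiable_def by (smt (verit))
  have "l = d z" using z der[of z] bc DERIV_unique by force
  moreover have "l2 = d z2" using z2 der[of z2] ab DERIV_unique by force
  moreover have "d z \<le> d z2" using mono z z2 by auto
  moreover have "(f b - f a)/(b-a) = l" using z(4) ab by simp
  moreover have "(f c - f b)/(c-b) = l2" using z2(4) bc by simp
  ultimately show ?thesis by simp
qed


definition Hp :: "real \<Rightarrow> real \<Rightarrow> real" where "Hp \<alpha> x = x powr (1 - \<alpha>)"
definition Hd :: "real \<Rightarrow> real \<Rightarrow> real" where "Hd \<alpha> x = (1 - \<alpha>) * x powr (- \<alpha>)"

lemma Hp_deriv: "x > 0 \<Longrightarrow> (Hp \<alpha> has_real_derivative Hd \<alpha> x) (at x)"
  unfolding Hp_def Hd_def using has_real_derivative_powr[of x "1-\<alpha>"] by simp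

lemma Hd_deriv: "x > 0 \<Longrightarrow> (Hd \<alpha> has_real_derivative (1-\<alpha>) * (- \<alpha> * x powr (- \<alpha> - 1))) (at x)"
  unfolding Hd_def by (rule DERIV_cmult) (rule has_real_derivative_powr)

lemma Hp_cont: "\<alpha> < 1 \<Longrightarrow> S \<subseteq> {0..} \<Longrightarrow> continuous_on S (\<lambda>x. Hp \<alpha> (f x)) \<Longrightarrow> True"
  by simp

lemma Hp_cont_shift: assumes "\<alpha> < 1" "\<And>x. x \<in> S \<Longrightarrow> 0 \<le> c + s * x"
  shows "continuous_on S (\<lambda>x. Hp \<alpha> (c + s * x))"
  unfolding Hp_def
  by (rule continuous_on_powr') (use assms in \<open>auto intro!: continuous_intros\<close>)

lemma Hd_cont_shift: assumes "\<And>x. x \<in> S \<Longrightarrow> 0 < c + s * x"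
  shows "continuous_on S (\<lambda>x. Hd \<alpha> (c + s * x))"
  unfolding Hd_def
  by (intro continuous_intros) (use assms in force)

lemma Hd_decr: "0 < \<alpha> \<Longrightarrow> \<alpha> < 1 \<Longrightarrow> 0 < x \<Longrightarrow> x \<le> y \<Longrightarrow> Hd \<alpha> y \<le> Hd \<alpha> x"
  unfolding Hd_def using powr_mono2'[of "-\<alpha>" x y] by (intro mult_left_mono) auto

lemma Hp_concave:
  assumes al: "0 < \<alpha>" "\<alpha> < 1" and "0 \<le> a" "a < b" "b < c"
  shows "(Hp \<alpha> c - Hp \<alpha> b)/(c-b) \<le> (Hp \<alpha> b - Hp \<alpha> a)/(b-a)"
proof -
  have "((\<lambda>x. - Hp \<alpha> x) b - (\<lambda>x. - Hp \<alpha> x) a)/(b-a) \<le> ((\<lambda>x. - Hp \<alpha> x) c - (\<lambda>x. - Hp \<alpha> x) b)/(c-b)"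
  proof (rule slope_mono[where d = "\<lambda>x. - Hd \<alpha> x"])
    show "continuous_on {a..c} (\<lambda>x. - Hp \<alpha> x)"
      using Hp_cont_shift[of \<alpha> "{a..c}" 0 1] assms by (auto intro!: continuous_intros)
    show "((\<lambda>x. - Hp \<alpha> x) has_real_derivative - Hd \<alpha> x) (at x)" if "a < x" "x < c" for x
      using Hp_deriv[of x \<alpha>] that assms by (auto intro: DERIV_minus)
    show "- Hd \<alpha> x \<le> - Hd \<alpha> y" if "a < x" "x \<le> y" "y < c" for x y
      using Hd_decr[of \<alpha> x y] that assms by auto
  qed (use assms in auto)
  then show ?thesis by (simp add: field_simps diff_divide_distrib)
qed

lemma Hd_convex:
  assumes al: "0 < \<alpha>" "\<alpha> < 1" and "0 < a" "a < b" "b < c"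
  shows "(Hd \<alpha> b - Hd \<alpha> a)/(b-a) \<le> (Hd \<alpha> c - Hd \<alpha> b)/(c-b)"
proof (rule slope_mono[where d = "\<lambda>x. (1-\<alpha>) * (- \<alpha> * x powr (- \<alpha> - 1))"])
  show "continuous_on {a..c} (Hd \<alpha>)"
    using Hd_cont_shift[of "{a..c}" 0 1 \<alpha>] assms by auto
  show "(Hd \<alpha> has_real_derivative (1-\<alpha>) * (- \<alpha> * x powr (- \<alpha> - 1))) (at x)" if "a < x" "x < c" for x
    using Hd_deriv[of x \<alpha>] that assms by auto
  show "(1-\<alpha>) * (- \<alpha> * x powr (- \<alpha> - 1)) \<le> (1-\<alpha>) * (- \<alpha> * y powr (- \<alpha> - 1))"
    if "a < x" "x \<le> y" "y < c" for x y
  proof -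
    have "\<alpha> * y powr (- \<alpha> - 1) \<le> \<alpha> * x powr (- \<alpha> - 1)"
    proof (rule mult_left_mono)
      show "y powr (- \<alpha> - 1) \<le> x powr (- \<alpha> - 1)"
        using powr_mono2'[of "-\<alpha>-1" x y] that assms by simp
    qed (use assms in simp)
    then show ?thesis using assms by (rule_tac mult_left_mono) auto
  qed
qed (use assms in auto)


lemma Hp_cont_gen: "\<alpha> < 1 \<Longrightarrow> continuous_on S f \<Longrightarrow> (\<And>x. x\<in>S \<Longrightarrow> 0 \<le> f x) \<Longrightarrow> continuous_on S (\<lambda>x. Hp \<alpha> (f x))"
  unfolding Hp_def by (rule continuous_on_powr') (auto intro!: continuous_intros)

lemma Hp_shift_deriv: assumes "T - x > 0" shows "((\<lambda>T. Hp \<alpha> (T - x)) has_real_derivative Hd \<alpha> (T - x)) (at T)"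
proof -
  have "((\<lambda>T. T - x) has_real_derivative 1) (at T)" by (auto intro!: derivative_eq_intros)
  from DERIV_chain2[OF Hp_deriv[OF assms] this] show ?thesis by simp
qed

lemma L1_coef_eq:
  assumes al: "0<\<alpha>" "\<alpha><1" and lt: "t (l-1) < t l" and le: "t l \<le> t n"
  shows "L1_coef \<alpha> t n l = (Hp \<alpha> (t n - t (l-1)) - Hp \<alpha> (t n - t l)) / ((1-\<alpha>) * Gamma (1-\<alpha>) * tau t l)"
proof -
  define C where "C = (1-\<alpha>) * Gamma (1-\<alpha>)"
  have Cpos: "C > 0" using al by (simp add: C_def)
  define F where "F s = - Hp \<alpha> (t n - s) / C" for s
  have "((\<lambda>s. omega (1-\<alpha>) (t n - s)) has_integral (F (t l) - F (t (l-1)))) {t (l-1)..t l}"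
  proof (rule fundamental_theorem_of_calculus_interior)
    show "t (l-1) \<le> t l" using lt by simp
    have "continuous_on {t (l-1)..t l} (\<lambda>s. Hp \<alpha> (t n - s))"
      by (rule Hp_cont_gen) (use le al in \<open>auto intro!: continuous_intros\<close>)
    then show "continuous_on {t (l-1)..t l} F" unfolding F_def using Cpos by (auto intro!: continuous_intros)
    fix s assume s: "s \<in> {t (l-1)<..<t l}"
    have pos: "t n - s > 0" using s le by auto
    have d: "((\<lambda>s. Hp \<alpha> (t n - s)) has_real_derivative Hd \<alpha> (t n - s) * (-1)) (at s)"
    proof -
      have "((\<lambda>s. t n - s) has_real_derivative -1) (at s)" by (auto intro!: derivative_eq_intros)
      from DERIV_chain2[OF Hp_deriv[OF pos] this] show ?thesis by simp
    qed
    have "(F has_real_derivative -(Hd \<alpha> (t n - s) * (-1))/C) (at s)"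
      unfolding F_def by (rule DERIV_cdivide[OF DERIV_minus[OF d]])
    moreover have "-(Hd \<alpha> (t n - s) * (-1))/C = omega (1-\<alpha>) (t n - s)"
      unfolding Hd_def omega_def C_def using al by simp
    ultimately show "(F has_vector_derivative omega (1-\<alpha>) (t n - s)) (at s)"
      using has_real_derivative_iff_has_vector_derivative by metis
  qed
  then have "integral {t (l-1)..t l} (\<lambda>s. omega (1-\<alpha>) (t n - s)) = F (t l) - F (t (l-1))"
    by (rule integral_unique)
  then have I: "integral {t (l-1)..t l} (\<lambda>s. omega (1-\<alpha>) (t n - s)) = (Hp \<alpha> (t n - t (l-1)) - Hp \<alpha> (t n - t l)) / C"
    by (simp add: F_def diff_divide_distrib)
  have tp: "tau t l > 0" using lt by (simp add: tau_def)
  show ?thesis unfolding L1_coef_def I C_def[symmetric] using tp Cpos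
    by (simp add: field_simps)
qed

lemma diff_decr:
  assumes al: "0<\<alpha>" "\<alpha><1" and p: "p > 0" and u: "0 \<le> u1" "u1 \<le> u2"
  shows "Hp \<alpha> (u2+p) - Hp \<alpha> u2 \<le> Hp \<alpha> (u1+p) - Hp \<alpha> u1"
proof -
  have "(\<lambda>u. Hp \<alpha> (u+p) - Hp \<alpha> u) u1 \<ge> (\<lambda>u. Hp \<alpha> (u+p) - Hp \<alpha> u) u2"
  proof (rule DERIV_nonpos_imp_decreasing_open[OF u(2)])
    fix x assume x: "u1 < x" "x < u2"
    have d1: "((\<lambda>u. Hp \<alpha> (u - (-p))) has_real_derivative Hd \<alpha> (x - (-p))) (at x)"
      by (rule Hp_shift_deriv) (use x u p in auto)
    have d2: "((\<lambda>u. Hp \<alpha> (u - 0)) has_real_derivative Hd \<alpha> (x - 0)) (at x)"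
      by (rule Hp_shift_deriv) (use x u p in auto)
    have "((\<lambda>u. Hp \<alpha> (u+p) - Hp \<alpha> u) has_real_derivative Hd \<alpha> (x+p) - Hd \<alpha> x) (at x)"
      using DERIV_diff[OF d1 d2] by simp
    moreover have "Hd \<alpha> (x+p) - Hd \<alpha> x \<le> 0" using Hd_decr[of \<alpha> x "x+p"] al x u p by auto
    ultimately show "\<exists>y. ((\<lambda>u. Hp \<alpha> (u+p) - Hp \<alpha> u) has_real_derivative y) (at x) \<and> y \<le> 0" by blast
  next
    have "continuous_on {u1..u2} (\<lambda>u. Hp \<alpha> (u+p))"
      by (rule Hp_cont_gen) (use u p al in \<open>auto intro!: continuous_intros\<close>)
    moreover have "continuous_on {u1..u2} (\<lambda>u. Hp \<alpha> u)"
      using Hp_cont_gen[of \<alpha> "{u1..u2}" "\<lambda>u. u"] u al by (auto intro!: continuous_intros)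
    ultimately show "continuous_on {u1..u2} (\<lambda>u. Hp \<alpha> (u+p) - Hp \<alpha> u)"
      by (intro continuous_intros)
  qed
  then show ?thesis by simp
qed

definition psi :: "real \<Rightarrow> real \<Rightarrow> real \<Rightarrow> real \<Rightarrow> real \<Rightarrow> real" where
  "psi \<alpha> x0 x1 x2 T = (Hp \<alpha> (T - x1) - Hp \<alpha> (T - x2))/(x2-x1) - (Hp \<alpha> (T - x0) - Hp \<alpha> (T - x1))/(x1-x0)"

lemma psi_nonneg:
  assumes al: "0<\<alpha>" "\<alpha><1" and x: "x0 < x1" "x1 < x2" "x2 \<le> T"
  shows "0 \<le> psi \<alpha> x0 x1 x2 T"
proof -
  have "(Hp \<alpha> (T-x0) - Hp \<alpha> (T-x1))/((T-x0)-(T-x1)) \<le> (Hp \<alpha> (T-x1) - Hp \<alpha> (T-x2))/((T-x1)-(T-x2))"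
    by (rule Hp_concave) (use al x in auto)
  moreover have "(T-x0)-(T-x1) = x1 - x0" "(T-x1)-(T-x2) = x2 - x1" by simp_all
  ultimately show ?thesis unfolding psi_def by simp
qed

lemma psi_decr:
  assumes al: "0<\<alpha>" "\<alpha><1" and x: "x0 < x1" "x1 < x2" "x2 \<le> T1" "T1 \<le> T2"
  shows "psi \<alpha> x0 x1 x2 T2 \<le> psi \<alpha> x0 x1 x2 T1"
proof -
  have "(\<lambda>T. psi \<alpha> x0 x1 x2 T) T1 \<ge> (\<lambda>T. psi \<alpha> x0 x1 x2 T) T2"
  proof (rule DERIV_nonpos_imp_decreasing_open[OF x(4)])
    fix T assume T: "T1 < T" "T < T2"
    have d0: "((\<lambda>T. Hp \<alpha> (T - x0)) has_real_derivative Hd \<alpha> (T - x0)) (at T)"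
      by (rule Hp_shift_deriv) (use x T in auto)
    have d1: "((\<lambda>T. Hp \<alpha> (T - x1)) has_real_derivative Hd \<alpha> (T - x1)) (at T)"
      by (rule Hp_shift_deriv) (use x T in auto)
    have d2: "((\<lambda>T. Hp \<alpha> (T - x2)) has_real_derivative Hd \<alpha> (T - x2)) (at T)"
      by (rule Hp_shift_deriv) (use x T in auto)
    have "((\<lambda>T. psi \<alpha> x0 x1 x2 T) has_real_derivative
        (Hd \<alpha> (T - x1) - Hd \<alpha> (T - x2))/(x2-x1) - (Hd \<alpha> (T - x0) - Hd \<alpha> (T - x1))/(x1-x0)) (at T)"
      unfolding psi_def
      by (intro DERIV_diff DERIV_cdivide d0 d1 d2)
    moreover have "(Hd \<alpha> (T-x1) - Hd \<alpha> (T-x2))/((T-x1)-(T-x2)) \<le> (Hd \<alpha> (T-x0) - Hd \<alpha> (T-x1))/((T-x0)-(T-x1))"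
      by (rule Hd_convex) (use al x T in auto)
    moreover have "(T-x0)-(T-x1) = x1 - x0" "(T-x1)-(T-x2) = x2 - x1" by simp_all
    ultimately show "\<exists>y. ((\<lambda>T. psi \<alpha> x0 x1 x2 T) has_real_derivative y) (at T) \<and> y \<le> 0"
      by (intro exI[of _ "(Hd \<alpha> (T - x1) - Hd \<alpha> (T - x2))/(x2-x1) - (Hd \<alpha> (T - x0) - Hd \<alpha> (T - x1))/(x1-x0)"]) simp
  next
    have c: "continuous_on {T1..T2} (\<lambda>T. Hp \<alpha> (T - x))" if "x \<le> x2" for x
      by (rule Hp_cont_gen) (use x al that in \<open>auto intro!: continuous_intros\<close>)
    show "continuous_on {T1..T2} (\<lambda>T. psi \<alpha> x0 x1 x2 T)"
      unfolding psi_def using x by (intro continuous_intros c) auto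
  qed
  then show ?thesis by simp
qed

definition cdiff :: "(nat \<Rightarrow> real) \<Rightarrow> nat \<Rightarrow> real" where
  "cdiff b l = b l - (if l = 1 then 0 else b (l-1))"

lemma cdiff_tel: "(\<Sum>l=1..n. cdiff b l) = (if n = 0 then 0 else b n)"
proof (induction n)
  case 0 then show ?case by simp
next
  case (Suc n) then show ?case by (cases "n = 0") (auto simp: cdiff_def)
qed

lemma abel: "(\<Sum>l=1..n. b l * w l) = (\<Sum>l=1..n. cdiff b l * (\<Sum>i=l..n. w i))"
proof (induction n)
  case 0 then show ?case by simp
next
  case (Suc n)
  have "(\<Sum>l=1..Suc n. cdiff b l * (\<Sum>i=l..Suc n. w i))
      = (\<Sum>l=1..Suc n. cdiff b l * (\<Sum>i=l..n. w i) + cdiff b l * w (Suc n))"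
    by (rule sum.cong) (auto simp: ring_distribs)
  also have "\<dots> = (\<Sum>l=1..Suc n. cdiff b l * (\<Sum>i=l..n. w i)) + (\<Sum>l=1..Suc n. cdiff b l) * w (Suc n)"
    by (simp only: sum.distrib sum_distrib_right)
  also have "(\<Sum>l=1..Suc n. cdiff b l * (\<Sum>i=l..n. w i)) = (\<Sum>l=1..n. cdiff b l * (\<Sum>i=l..n. w i))"
    by simp
  also have "(\<Sum>l=1..Suc n. cdiff b l) = b (Suc n)" using cdiff_tel[of b "Suc n"] by simp
  finally show ?case using Suc by simp
qed

lemma kernel_pos:
  fixes a :: "nat \<Rightarrow> nat \<Rightarrow> real" and w :: "nat \<Rightarrow> real"
  assumes K1: "\<And>n l. 1 \<le> l \<Longrightarrow> l \<le> n \<Longrightarrow> n \<le> N \<Longrightarrow> 0 \<le> cdiff (a n) l"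
      and K2: "\<And>n l. 1 \<le> l \<Longrightarrow> l \<le> n \<Longrightarrow> Suc n \<le> N \<Longrightarrow> cdiff (a (Suc n)) l \<le> cdiff (a n) l"
  shows "0 \<le> (\<Sum>n=1..N. w n * (\<Sum>l=1..n. a n l * w l))"
proof -
  define S where "S n l = (\<Sum>i=l..n. w i)" for n l
  define P where "P n = (\<Sum>l=1..n. cdiff (a n) l * (S n l)^2)" for n
  have step: "P (Suc m) - P m \<le> 2 * (w (Suc m) * (\<Sum>l=1..Suc m. a (Suc m) l * w l))"
    if m: "Suc m \<le> N" for m
  proof -
    have ab: "(\<Sum>l=1..Suc m. a (Suc m) l * w l) = (\<Sum>l=1..Suc m. cdiff (a (Suc m)) l * S (Suc m) l)"
      unfolding S_def by (rule abel)
    have Sn: "S (Suc m) l = S m l + w (Suc m)" if "l \<le> Suc m" for l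
      using that by (simp add: S_def)
    have "2 * (w (Suc m) * (\<Sum>l=1..Suc m. cdiff (a (Suc m)) l * S (Suc m) l))
        = (\<Sum>l=1..Suc m. cdiff (a (Suc m)) l * ((S (Suc m) l)^2 - (S m l)^2)
              + cdiff (a (Suc m)) l * (w (Suc m))^2)"
      unfolding sum_distrib_left
      by (rule sum.cong) (auto simp: Sn power2_eq_square algebra_simps)
    also have "\<dots> = P (Suc m) - (\<Sum>l=1..Suc m. cdiff (a (Suc m)) l * (S m l)^2)
                    + (\<Sum>l=1..Suc m. cdiff (a (Suc m)) l * (w (Suc m))^2)"
      by (simp add: P_def sum.distrib sum_subtractf right_diff_distrib)
    also have "(\<Sum>l=1..Suc m. cdiff (a (Suc m)) l * (S m l)^2) = (\<Sum>l=1..m. cdiff (a (Suc m)) l * (S m l)^2)"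
      by (simp add: S_def)
    finally have eq: "2 * (w (Suc m) * (\<Sum>l=1..Suc m. a (Suc m) l * w l))
        = P (Suc m) - (\<Sum>l=1..m. cdiff (a (Suc m)) l * (S m l)^2)
          + (\<Sum>l=1..Suc m. cdiff (a (Suc m)) l * (w (Suc m))^2)"
      using ab by simp
    have "(\<Sum>l=1..m. cdiff (a (Suc m)) l * (S m l)^2) \<le> P m"
      unfolding P_def by (rule sum_mono) (use K2 m in \<open>auto intro!: mult_right_mono\<close>)
    moreover have "0 \<le> (\<Sum>l=1..Suc m. cdiff (a (Suc m)) l * (w (Suc m))^2)"
      by (rule sum_nonneg) (use K1 m in auto)
    ultimately show ?thesis using eq by linarith
  qed
  have ind: "k \<le> N \<Longrightarrow> P k \<le> 2 * (\<Sum>n=1..k. w n * (\<Sum>l=1..n. a n l * w l))" for k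
  proof (induction k)
    case 0 then show ?case by (simp add: P_def)
  next
    case (Suc k)
    then show ?case using step[of k] by simp
  qed
  have "0 \<le> P N" unfolding P_def by (rule sum_nonneg) (use K1 in auto)
  with ind[of N] show ?thesis by simp
qed

lemma shift1:
  fixes g :: "int \<Rightarrow> real"
  assumes M: "M > 0" and per: "\<And>i. g (i + int M) = g i"
  shows "(\<Sum>i\<in>{1..int M}. g (i+1)) = (\<Sum>i\<in>{1..int M}. g i)"
proof -
  have "(\<Sum>i\<in>{1..int M}. g (i+1)) = (\<Sum>i\<in>{1..int M}. g (if i = int M then 1 else i+1))"
  proof -
    have g1: "g (int M + 1) = g 1" using per[of 1] by (simp add: add.commute)
    show ?thesis by (rule sum.cong) (auto simp: g1)
  qed
  also have "\<dots> = (\<Sum>i\<in>{1..int M}. g i)"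
    by (rule sum.reindex_bij_witness[of _ "\<lambda>i. if i = 1 then int M else i - 1" "\<lambda>i. if i = int M then 1 else i + 1"])
       (use M in auto)
  finally show ?thesis .
qed

lemma per_x: "periodic_grid M v \<Longrightarrow> v (i + int M + c) j = v (i + c) j"
  unfolding periodic_grid_def by (metis add.commute add.left_commute)
lemma per_y: "periodic_grid M v \<Longrightarrow> v i (j + int M + c) = v i (j + c)"
  unfolding periodic_grid_def by (metis add.commute add.left_commute)
lemma per_x0: "periodic_grid M v \<Longrightarrow> v (i + int M) j = v i j"
  unfolding periodic_grid_def by metis
lemma per_y0: "periodic_grid M v \<Longrightarrow> v i (j + int M) = v i j"
  unfolding periodic_grid_def by metis

lemma sbp:
  assumes h: "h \<noteq> 0" and M: "M > 0" and pv: "periodic_grid M v" and pu: "periodic_grid M u"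
  shows "grid_inner h M (lap_h h v) u =
    - (\<Sum>i\<in>{1..int M}. \<Sum>j\<in>{1..int M}. (v (i+1) j - v i j) * (u (i+1) j - u i j)
          + (v i (j+1) - v i j) * (u i (j+1) - u i j))"
proof -
  let ?I = "{1..int M}"
  have e0: "grid_inner h M (lap_h h v) u = (\<Sum>i\<in>?I. \<Sum>j\<in>?I.
        ((v (i+1) j - v i j) * u i j - (v i j - v (i-1) j) * u i j)
      + ((v i (j+1) - v i j) * u i j - (v i j - v i (j-1)) * u i j))"
    unfolding grid_inner_def lap_h_def sum_distrib_left
    by (intro sum.cong refl) (use h in \<open>simp add: field_simps\<close>)
  have sx: "(\<Sum>i\<in>?I. \<Sum>j\<in>?I. (v i j - v (i-1) j) * u i j)
          = (\<Sum>i\<in>?I. \<Sum>j\<in>?I. (v (i+1) j - v i j) * u (i+1) j)"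
  proof -
    have "(\<Sum>i\<in>?I. (\<lambda>i. \<Sum>j\<in>?I. (v i j - v (i-1) j) * u i j) (i+1)) = (\<Sum>i\<in>?I. (\<lambda>i. \<Sum>j\<in>?I. (v i j - v (i-1) j) * u i j) i)"
    proof (rule shift1[OF M])
      fix i
      have "v (i + int M - 1) j = v (i - 1) j" for j using per_x[OF pv, of i "-1" j] by simp
      then show "(\<Sum>j\<in>?I. (v (i + int M) j - v (i + int M - 1) j) * u (i + int M) j) = (\<Sum>j\<in>?I. (v i j - v (i-1) j) * u i j)"
        using per_x0[OF pv] per_x0[OF pu] by simp
    qed
    then show ?thesis by simp
  qed
  have sy: "(\<Sum>i\<in>?I. \<Sum>j\<in>?I. (v i j - v i (j-1)) * u i j)
          = (\<Sum>i\<in>?I. \<Sum>j\<in>?I. (v i (j+1) - v i j) * u i (j+1))"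
  proof (rule sum.cong[OF refl])
    fix i
    have "(\<Sum>j\<in>?I. (\<lambda>j. (v i j - v i (j-1)) * u i j) (j+1)) = (\<Sum>j\<in>?I. (\<lambda>j. (v i j - v i (j-1)) * u i j) j)"
    proof (rule shift1[OF M])
      fix j
      have "v i (j + int M - 1) = v i (j - 1)" using per_y[OF pv, of i j "-1"] by simp
      then show "(v i (j + int M) - v i (j + int M - 1)) * u i (j + int M) = (v i j - v i (j-1)) * u i j"
        using per_y0[OF pv] per_y0[OF pu] by simp
    qed
    then show "(\<Sum>j\<in>?I. (v i j - v i (j-1)) * u i j) = (\<Sum>j\<in>?I. (v i (j+1) - v i j) * u i (j+1))" by simp
  qed
  have "grid_inner h M (lap_h h v) u = (\<Sum>i\<in>?I. \<Sum>j\<in>?I. (v (i+1) j - v i j) * u i j)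
       - (\<Sum>i\<in>?I. \<Sum>j\<in>?I. (v i j - v (i-1) j) * u i j)
       + (\<Sum>i\<in>?I. \<Sum>j\<in>?I. (v i (j+1) - v i j) * u i j)
       - (\<Sum>i\<in>?I. \<Sum>j\<in>?I. (v i j - v i (j-1)) * u i j)"
    unfolding e0 by (simp add: sum.distrib sum_subtractf)
  also have "\<dots> = - (\<Sum>i\<in>?I. \<Sum>j\<in>?I. (v (i+1) j - v i j) * (u (i+1) j - u i j)
          + (v i (j+1) - v i j) * (u i (j+1) - u i j))"
    unfolding sx sy by (simp add: sum.distrib sum_subtractf sum_distrib_left algebra_simps)
  finally show ?thesis .
qed

lemma energy_sbp:
  assumes h: "h \<noteq> 0" and M: "M > 0" and pv: "periodic_grid M v" and pv': "periodic_grid M v'"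
  shows "grad_norm_sq h M v - grad_norm_sq h M v' + 2 * grid_inner h M (lap_h h v) (\<lambda>i j. v i j - v' i j) \<le> 0"
proof -
  let ?I = "{1..int M}"
  have pu: "periodic_grid M (\<lambda>i j. v i j - v' i j)"
    using pv pv' unfolding periodic_grid_def by simp
  have gn: "grad_norm_sq h M x = (\<Sum>i\<in>?I. \<Sum>j\<in>?I. (x (i+1) j - x i j)^2 + (x i (j+1) - x i j)^2)" for x
    unfolding grad_norm_sq_def sum_distrib_left
    by (intro sum.cong refl) (use h in \<open>simp add: field_simps power_divide\<close>)
  have "grad_norm_sq h M v - grad_norm_sq h M v' + 2 * grid_inner h M (lap_h h v) (\<lambda>i j. v i j - v' i j)
     = (\<Sum>i\<in>?I. \<Sum>j\<in>?I. ((v (i+1) j - v i j)^2 + (v i (j+1) - v i j)^2)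
          - ((v' (i+1) j - v' i j)^2 + (v' i (j+1) - v' i j)^2)
          - 2 * ((v (i+1) j - v i j) * ((v (i+1) j - v' (i+1) j) - (v i j - v' i j))
                + (v i (j+1) - v i j) * ((v i (j+1) - v' i (j+1)) - (v i j - v' i j))))"
    unfolding gn sbp[OF h M pv pu] by (simp add: sum.distrib sum_subtractf sum_distrib_left)
  also have "\<dots> = (\<Sum>i\<in>?I. \<Sum>j\<in>?I. - (((v (i+1) j - v i j) - (v' (i+1) j - v' i j))^2 + ((v i (j+1) - v i j) - (v' i (j+1) - v' i j))^2))"
    by (intro sum.cong refl) (simp add: power2_eq_square algebra_simps)
  also have "\<dots> \<le> 0" by (intro sum_nonpos) simp
  finally show ?thesis .
qed


lemma grid_inner_cmult1: "c * grid_inner h M x y = grid_inner h M (\<lambda>i j. c * x i j) y"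
  unfolding grid_inner_def by (simp add: sum_distrib_left algebra_simps)

lemma grid_inner_diff1: "grid_inner h M (\<lambda>i j. x i j - z i j) y = grid_inner h M x y - grid_inner h M z y"
  unfolding grid_inner_def by (simp add: sum_subtractf algebra_simps)

lemma grid_inner_cong1: "(\<And>i j. x i j = z i j) \<Longrightarrow> grid_inner h M x y = grid_inner h M z y"
  unfolding grid_inner_def by simp

lemma grid_inner_div2: "grid_inner h M x (\<lambda>i j. y i j / c) = grid_inner h M x y / c"
proof -
  have "(\<Sum>i\<in>{1..int M}. \<Sum>j\<in>{1..int M}. x i j * (y i j / c)) = (\<Sum>i\<in>{1..int M}. \<Sum>j\<in>{1..int M}. x i j * y i j) / c"
    by (simp add: sum_divide_distrib)
  then show ?thesis unfolding grid_inner_def by simp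
qed


theorem mainTheorem6:
  fixes L m \<epsilon> \<alpha> \<beta> \<kappa> :: real
    and F f :: "real \<Rightarrow> real"
    and M N :: nat and h :: real
    and V V' :: "real \<Rightarrow> real" and K1 K2 :: real
    and t :: "nat \<Rightarrow> real"
    and \<phi> \<phi>hat :: "nat \<Rightarrow> gridfun" and R :: "nat \<Rightarrow> real"
  assumes L_pos: "L > 0" and m_pos: "m > 0" and eps_pos: "\<epsilon> > 0"
    and alpha: "0 < \<alpha>" "\<alpha> < 1"
    and M_pos: "M > 0" and h_def: "h = L / real M"
    and nonlin: "(F = F_dw \<and> f = f_dw \<and> \<beta> = 1) \<or>
       (\<exists>\<theta> \<theta>c. 0 < \<theta> \<and> \<theta> < \<theta>c \<and> F = F_fh \<theta> \<theta>c \<and> f = f_fh \<theta> \<theta>c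
                  \<and> 0 < \<beta> \<and> \<beta> < 1 \<and> f \<beta> = 0)"
    and A1_deriv: "\<And>z. (V has_real_derivative V' z) (at z)"
    and A1_cont: "continuous_on UNIV V'"
    and A1_W2inf: "\<exists>C. \<forall>x y. \<bar>V' x - V' y\<bar> \<le> C * \<bar>x - y\<bar>"
    and A1_vals: "V 1 = 1" "V' 1 = 0"
    and A1_bound: "\<And>z. \<bar>V' z\<bar> \<le> K1"
    and A2: "K2 > 0" "\<And>z. 0 \<le> V z \<and> V z \<le> K2"
    and A3: "\<And>z1 z2. \<bar>z1 - 1\<bar> \<le> \<bar>z2 - 1\<bar> \<Longrightarrow> \<bar>V z1 - 1\<bar> \<le> \<bar>V z2 - 1\<bar>"
    and t0: "t 0 = 0"
    and t_mono: "\<And>k. 1 \<le> k \<Longrightarrow> k \<le> N \<Longrightarrow> t (k - 1) < t k"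
    and N_pos: "N \<ge> 1"
    and kappa: "\<kappa> \<ge> 0" "\<And>x. x \<in> {-\<beta>..\<beta>} \<Longrightarrow> \<bar>deriv f x\<bar> \<le> \<kappa>"
    and init: "periodic_grid M (\<phi> 0)" "grid_supnorm M (\<phi> 0) \<le> \<beta>"
    and tau1: "tau t 1 < (\<kappa> * m * Gamma (2 - \<alpha>)) powr (- 1 / \<alpha>)"
    and pred1: "\<phi>hat 1 \<in> V_beta M \<beta>"
      "\<And>i j. L1_coef \<alpha> t 1 1 * (\<phi>hat 1 i j - \<phi> 0 i j)
               = m * (\<epsilon>\<^sup>2 * lap_h h (\<phi>hat 1) i j + f (\<phi>hat 1 i j))"
    and pred: "\<And>n i j. 2 \<le> n \<Longrightarrow> n \<le> N \<Longrightarrow>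
       \<phi>hat n i j = clip \<beta> ((1 + ratio t n) * \<phi> (n - 1) i j - ratio t n * \<phi> (n - 2) i j)"
    and sol_per: "\<And>n. 1 \<le> n \<Longrightarrow> n \<le> N \<Longrightarrow> periodic_grid M (\<phi> n)"
    and scheme_phi: "\<And>n i j. 1 \<le> n \<Longrightarrow> n \<le> N \<Longrightarrow>
       L1_caputo \<alpha> t \<phi> n i j
         = m * (\<epsilon>\<^sup>2 * lap_h h (\<phi> n) i j
                + V (g_h F h M (\<phi>hat n) (R (n - 1))) * f (\<phi>hat n i j)
                - \<kappa> * V (g_h F h M (\<phi>hat n) (R (n - 1))) * (\<phi> n i j - \<phi>hat n i j))"
    and scheme_R: "\<And>n. 1 \<le> n \<Longrightarrow> n \<le> N \<Longrightarrow>
       (R n - R (n - 1)) / tau t n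
         = V (g_h F h M (\<phi>hat n) (R (n - 1)))
           * grid_inner h M (\<lambda>i j. - f (\<phi>hat n i j) + \<kappa> * (\<phi> n i j - \<phi>hat n i j))
                            (\<lambda>i j. (\<phi> n i j - \<phi> (n - 1) i j) / tau t n)"
  shows "\<forall>n\<in>{1..N}. energy_h \<epsilon> h M (\<phi> n) (R n) \<le> energy_h \<epsilon> h M (\<phi> 0) (R 0)"
proof -
  have hpos: "h > 0" using L_pos M_pos h_def by simp
  have hne: "h \<noteq> 0" using hpos by simp
  have tle: "t k \<le> t n" if "k \<le> n" "n \<le> N" for k n
    using that
  proof (induction n)
    case 0 then show ?case by simp
  next
    case (Suc n)
    show ?case
    proof (cases "k = Suc n")
      case True then show ?thesis by simp
    next
      case False
      then have "t k \<le> t n" using Suc by simp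
      moreover have "t n < t (Suc n)" using t_mono[of "Suc n"] Suc.prems by simp
      ultimately show ?thesis by simp
    qed
  qed
  have tlt: "t k < t n" if "k < n" "n \<le> N" for k n
  proof -
    have "t k \<le> t (n-1)" using tle[of k "n-1"] that by simp
    moreover have "t (n-1) < t n" using t_mono[of n] that by simp
    ultimately show ?thesis by simp
  qed
  define C where "C = (1-\<alpha>) * Gamma (1-\<alpha>)"
  have Cpos: "C > 0" using alpha by (simp add: C_def)
  define a where "a n l = L1_coef \<alpha> t n l" for n l
  have aeq: "a n l = (Hp \<alpha> (t n - t (l-1)) - Hp \<alpha> (t n - t l)) / (C * tau t l)"
    if "1 \<le> l" "l \<le> n" "n \<le> N" for n l
    unfolding a_def C_def
    by (rule L1_coef_eq) (use alpha t_mono[of l] tle[of l n] that in auto)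
  have cd2: "cdiff (a n) (Suc (Suc k)) = psi \<alpha> (t k) (t (Suc k)) (t (Suc (Suc k))) (t n) / C"
    if "Suc (Suc k) \<le> n" "n \<le> N" for n k
  proof -
    have p1: "t (Suc k) < t (Suc (Suc k))" using tlt that by simp
    have p0: "t k < t (Suc k)" using tlt that by simp
    have "cdiff (a n) (Suc (Suc k)) = a n (Suc (Suc k)) - a n (Suc k)" by (simp add: cdiff_def)
    also have "\<dots> = (Hp \<alpha> (t n - t (Suc k)) - Hp \<alpha> (t n - t (Suc (Suc k)))) / (C * (t (Suc (Suc k)) - t (Suc k)))
        - (Hp \<alpha> (t n - t k) - Hp \<alpha> (t n - t (Suc k))) / (C * (t (Suc k) - t k))"
      using aeq[of "Suc (Suc k)" n] aeq[of "Suc k" n] that by (simp add: tau_def)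
    also have "\<dots> = psi \<alpha> (t k) (t (Suc k)) (t (Suc (Suc k))) (t n) / C"
    proof -
      have gen: "X/(C*aa) - Y/(C*bb) = (X/aa - Y/bb)/C" for X Y aa bb
        by (simp add: diff_divide_distrib mult.commute)
      show ?thesis unfolding psi_def gen ..
    qed
    finally show ?thesis .
  qed
  have K1: "0 \<le> cdiff (a n) l" if "1 \<le> l" "l \<le> n" "n \<le> N" for n l
  proof (cases "l = 1")
    case True
    have tp: "tau t 1 > 0" using t_mono[of 1] N_pos by (simp add: tau_def)
    have "Hp \<alpha> (t n - t 1) \<le> Hp \<alpha> (t n - t 0)"
      unfolding Hp_def by (rule powr_mono2) (use alpha tle[of 1 n] tle[of 0 n] t_mono[of 1] N_pos that True in auto)
    then show ?thesis using True aeq[of 1 n] that Cpos tp by (simp add: cdiff_def)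
  next
    case False
    have "l = Suc (Suc (l-2))" using that False by simp
    then obtain k where k: "l = Suc (Suc k)" by blast
    have "0 \<le> psi \<alpha> (t k) (t (Suc k)) (t (Suc (Suc k))) (t n)"
      by (rule psi_nonneg) (use alpha tlt tle that k in auto)
    then show ?thesis using cd2[of k n] that k Cpos by simp
  qed
  have K2: "cdiff (a (Suc n)) l \<le> cdiff (a n) l" if "1 \<le> l" "l \<le> n" "Suc n \<le> N" for n l
  proof (cases "l = 1")
    case True
    have tp: "tau t 1 > 0" using t_mono[of 1] N_pos by (simp add: tau_def)
    have "Hp \<alpha> ((t (Suc n) - t 1) + (t 1 - t 0)) - Hp \<alpha> (t (Suc n) - t 1)
       \<le> Hp \<alpha> ((t n - t 1) + (t 1 - t 0)) - Hp \<alpha> (t n - t 1)"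
      by (rule diff_decr) (use alpha tle[of 1 n] tle[of n "Suc n"] t_mono[of 1] N_pos that True in auto)
    then have "Hp \<alpha> (t (Suc n) - t 0) - Hp \<alpha> (t (Suc n) - t 1) \<le> Hp \<alpha> (t n - t 0) - Hp \<alpha> (t n - t 1)"
      by simp
    then have "(Hp \<alpha> (t (Suc n) - t 0) - Hp \<alpha> (t (Suc n) - t 1)) / (C * tau t 1) \<le> (Hp \<alpha> (t n - t 0) - Hp \<alpha> (t n - t 1)) / (C * tau t 1)"
      using Cpos tp by (intro divide_right_mono) auto
    then show ?thesis using True aeq[of 1 n] aeq[of 1 "Suc n"] that by (simp add: cdiff_def)
  next
    case False
    have "l = Suc (Suc (l-2))" using that False by simp
    then obtain k where k: "l = Suc (Suc k)" by blast
    have "psi \<alpha> (t k) (t (Suc k)) (t (Suc (Suc k))) (t (Suc n)) \<le> psi \<alpha> (t k) (t (Suc k)) (t (Suc (Suc k))) (t n)"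
      by (rule psi_decr) (use alpha tlt tle that k in auto)
    then show ?thesis using cd2[of k n] cd2[of k "Suc n"] that k Cpos by (simp add: divide_right_mono)
  qed
  define w where "w n = (\<lambda>i j. \<phi> n i j - \<phi> (n-1) i j)" for n
  define D where "D n = L1_caputo \<alpha> t \<phi> n" for n
  have caputo: "D n i j = (\<Sum>l=1..n. a n l * w l i j)" for n i j
    by (simp add: L1_caputo_def D_def a_def w_def)
  have pos: "0 \<le> (\<Sum>n=1..n0. w n i j * D n i j)" if "n0 \<le> N" for n0 i j
    unfolding caputo by (rule kernel_pos) (use K1 K2 that in auto)
  have per: "periodic_grid M (\<phi> n)" if "n \<le> N" for n
    using init sol_per[of n] that by (cases "n = 0") auto
  have step: "energy_h \<epsilon> h M (\<phi> n) (R n) \<le> energy_h \<epsilon> h M (\<phi> (n-1)) (R (n-1)) - (1/m) * grid_inner h M (D n) (w n)"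
    if n: "1 \<le> n" "n \<le> N" for n
  proof -
    define Vn where "Vn = V (g_h F h M (\<phi>hat n) (R (n - 1)))"
    define X where "X = (\<lambda>i j. - f (\<phi>hat n i j) + \<kappa> * (\<phi> n i j - \<phi>hat n i j))"
    have tp: "tau t n > 0" using t_mono[of n] n by (simp add: tau_def)
    have "(R n - R (n-1)) / tau t n = Vn * grid_inner h M X (w n) / tau t n"
      using scheme_R[OF n] unfolding Vn_def X_def w_def
      by (simp add: grid_inner_div2)
    then have R1: "R n - R (n-1) = Vn * grid_inner h M X (w n)"
      using tp by (simp add: divide_cancel_right)
    have pt: "Vn * X i j = \<epsilon>\<^sup>2 * lap_h h (\<phi> n) i j - (1/m) * D n i j" for i j
      using scheme_phi[OF n, of i j] m_pos unfolding Vn_def X_def D_def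
      by (simp add: field_simps)
    have R2: "R n - R (n-1) = \<epsilon>\<^sup>2 * grid_inner h M (lap_h h (\<phi> n)) (w n) - (1/m) * grid_inner h M (D n) (w n)"
      unfolding R1 grid_inner_cmult1 grid_inner_diff1[symmetric] using pt by (intro grid_inner_cong1) simp
    have pn1: "periodic_grid M (\<phi> (n-1))" using per n by simp
    have "grad_norm_sq h M (\<phi> n) - grad_norm_sq h M (\<phi> (n-1)) + 2 * grid_inner h M (lap_h h (\<phi> n)) (w n) \<le> 0"
      unfolding w_def by (rule energy_sbp[OF hne M_pos per[OF n(2)] pn1])
    then have "\<epsilon>\<^sup>2 / 2 * (grad_norm_sq h M (\<phi> n) - grad_norm_sq h M (\<phi> (n-1)) + 2 * grid_inner h M (lap_h h (\<phi> n)) (w n)) \<le> 0"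
      by (simp add: mult_nonneg_nonpos)
    then show ?thesis unfolding energy_h_def using R2 by (simp add: algebra_simps)
  qed
  have tel: "energy_h \<epsilon> h M (\<phi> n0) (R n0) \<le> energy_h \<epsilon> h M (\<phi> 0) (R 0) - (1/m) * (\<Sum>n=1..n0. grid_inner h M (D n) (w n))"
    if "n0 \<le> N" for n0
    using that
  proof (induction n0)
    case 0 then show ?case by simp
  next
    case (Suc n0)
    then show ?case using step[of "Suc n0"] by (simp add: algebra_simps)
  qed
  have sumpos: "0 \<le> (\<Sum>n=1..n0. grid_inner h M (D n) (w n))" if "n0 \<le> N" for n0
  proof -
    have "(\<Sum>n=1..n0. grid_inner h M (D n) (w n))
        = h\<^sup>2 * (\<Sum>n=1..n0. \<Sum>i\<in>{1..int M}. \<Sum>j\<in>{1..int M}. w n i j * D n i j)"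
      unfolding grid_inner_def by (simp add: sum_distrib_left mult.commute)
    also have "(\<Sum>n=1..n0. \<Sum>i\<in>{1..int M}. \<Sum>j\<in>{1..int M}. w n i j * D n i j)
        = (\<Sum>i\<in>{1..int M}. \<Sum>j\<in>{1..int M}. \<Sum>n=1..n0. w n i j * D n i j)"
      by (subst sum.swap, rule sum.cong[OF refl], rule sum.swap)
    finally show ?thesis using pos[OF that] by (simp add: sum_nonneg)
  qed
  show ?thesis
  proof
    fix n assume "n \<in> {1..N}"
    then have "n \<le> N" by simp
    from tel[OF this] sumpos[OF this] m_pos show "energy_h \<epsilon> h M (\<phi> n) (R n) \<le> energy_h \<epsilon> h M (\<phi> 0) (R 0)"
      by (smt (verit) divide_nonneg_nonneg mult_nonneg_nonneg)
  qed
qed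

end
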